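(* Let $a\in \mathcal{A}$. Then the following are equivalent: (1) $a$ has a $w$-weighted core inverse. (2) $aw\in \mathcal{A}^{\#}$ and $waw\in \mathcal{A}^{(1,3)}$.
   Context: $\mathcal{A}$ is a complex Banach *-algebra with identity and $w\in\mathcal{A}$. $a$ has a $w$-weighted core inverse if there is $x$ with $a(wx)^2=x$, $(wawx)^*=wawx$, $xw(aw)^2=aw$. $\mathcal{A}^{\#}$ is the set of group invertible elements; $\mathcal{A}^{(1,3)}$ is the set of $b$ having some $y$ with $b=byb$ and $(by)^*=by$. *)

theory Defs
  imports Complex_Main
begin

text \<open>A complex Banach *-algebra with identity: a Banach algebra with unit
(over the reals, as provided by the library), equipped with a complex scalar
multiplication compatible with the real one and the multiplication, and an
involution \<open>adj\<close> (the star operation) that is conjugate-linear,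
additive, involutive and anti-multiplicative.\<close>

class banach_star_algebra_1 = banach + real_normed_algebra_1 +
  fixes scaleC :: "complex \<Rightarrow> 'a \<Rightarrow> 'a"
    and adj :: "'a \<Rightarrow> 'a"
  assumes scaleC_of_real: "scaleC (complex_of_real r) x = scaleR r x"
    and scaleC_add_right: "scaleC c (x + y) = scaleC c x + scaleC c y"
    and scaleC_add_left: "scaleC (c + d) x = scaleC c x + scaleC d x"
    and scaleC_scaleC: "scaleC c (scaleC d x) = scaleC (c * d) x"
    and scaleC_one: "scaleC 1 x = x"
    and scaleC_mult_left: "scaleC c x * y = scaleC c (x * y)"
    and scaleC_mult_right: "x * scaleC c y = scaleC c (x * y)"
    and norm_scaleC: "norm (scaleC c x) = cmod c * norm x"
    and adj_adj: "adj (adj x) = x"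
    and adj_add: "adj (x + y) = adj x + adj y"
    and adj_mult: "adj (x * y) = adj y * adj x"
    and adj_scaleC: "adj (scaleC c x) = scaleC (cnj c) (adj x)"

definition w_core_inverse :: "'a::banach_star_algebra_1 \<Rightarrow> 'a \<Rightarrow> 'a \<Rightarrow> bool" where
  "w_core_inverse w a x \<longleftrightarrow>
     a * (w * x)^2 = x \<and> adj (w * a * w * x) = w * a * w * x \<and> x * w * (a * w)^2 = a * w"

definition has_w_core_inverse :: "'a::banach_star_algebra_1 \<Rightarrow> 'a \<Rightarrow> bool" where
  "has_w_core_inverse w a \<longleftrightarrow> (\<exists>x. w_core_inverse w a x)"

definition group_invertible :: "'a::banach_star_algebra_1 \<Rightarrow> bool" where
  "group_invertible b \<longleftrightarrow> (\<exists>x. b * x * b = b \<and> x * b * x = x \<and> b * x = x * b)"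

definition inv13 :: "'a::banach_star_algebra_1 \<Rightarrow> bool" where
  "inv13 b \<longleftrightarrow> (\<exists>y. b = b * y * b \<and> adj (b * y) = b * y)"

end

theory Submission
  imports Defs
begin

lemma gi_lemma:
  fixes b u v :: "'a::banach_star_algebra_1"
  assumes u: "b = u * b * b" and v: "b = b * b * v"
  shows "group_invertible b"
proof -
  have e: "u * b = b * v"
    by (metis u v mult.assoc)
  have bub: "b * u * b = b" by (metis e v mult.assoc)
  have ee: "u * b * (u * b) = u * b" by (metis bub mult.assoc)
  define g where "g = u * b * v"
  have bg: "b * g = u * b" unfolding g_def by (metis e v mult.assoc)
  have gb: "g * b = u * b" unfolding g_def by (metis e u mult.assoc)
  show ?thesis unfolding group_invertible_def
  proof (intro exI conjI)
    show "b * g * b = b" using bg u by (metis mult.assoc)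
    show "g * b * g = g" using gb ee unfolding g_def by (metis mult.assoc)
    show "b * g = g * b" using bg gb by simp
  qed
qed

theorem theorem2p4:
  fixes a w :: "'a::banach_star_algebra_1"
  shows "has_w_core_inverse w a \<longleftrightarrow> group_invertible (a * w) \<and> inv13 (w * a * w)"
proof
  assume "has_w_core_inverse w a"
  then obtain x where h1: "a * (w * x)^2 = x" and h2: "adj (w * a * w * x) = w * a * w * x"
    and h3: "x * w * (a * w)^2 = a * w"
    unfolding has_w_core_inverse_def w_core_inverse_def by blast
  define b where "b = a * w"
  define y where "y = x * w"
  have A: "y * b * b = b" using h3 unfolding b_def y_def power2_eq_square by (simp add: mult.assoc)
  have B: "b * y * y = y" using h1 unfolding b_def y_def power2_eq_square
    by (metis mult.assoc)
  have C: "b * y * b = b" by (metis A B mult.assoc)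
  have D: "b = b * b * (y * y * b)" by (metis B C mult.assoc)
  have gi: "group_invertible b" using gi_lemma[of b y "y * y * b"] A D by simp
  have "w * a * w * x * (w * a * w) = w * a * w"
    using C unfolding b_def y_def by (metis mult.assoc)
  hence "inv13 (w * a * w)" unfolding inv13_def using h2 by metis
  thus "group_invertible (a * w) \<and> inv13 (w * a * w)" using gi b_def by simp
next
  assume "group_invertible (a * w) \<and> inv13 (w * a * w)"
  then obtain g z where g1: "a * w * g * (a * w) = a * w" and g2: "g * (a * w) * g = g"
    and g3: "a * w * g = g * (a * w)"
    and z1: "w * a * w = w * a * w * z * (w * a * w)" and z2: "adj (w * a * w * z) = w * a * w * z"
    unfolding group_invertible_def inv13_def by blast
  define b where "b = a * w"
  have bgb: "b * g * b = b" using g1 b_def by simp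
  have gbg: "g * b * g = g" using g2 b_def by simp
  have c: "b * g = g * b" using g3 b_def by simp
  have bb: "b = g * b * b" by (metis bgb c mult.assoc)
  have bzwb: "b * z * w * b = b"
  proof -
    have "b = g * a * (w * a * w)" using bb unfolding b_def by (simp add: mult.assoc)
    also have "\<dots> = g * a * (w * a * w * z * (w * a * w))" using z1 by simp
    also have "\<dots> = g * b * b * z * w * b" unfolding b_def by (simp add: mult.assoc)
    also have "\<dots> = b * z * w * b" using bb by simp
    finally show ?thesis by simp
  qed
  define x where "x = g * b * z"
  have "w_core_inverse w a x" unfolding w_core_inverse_def
  proof (intro conjI)
    have "a * (w * x)^2 = b * g * b * z * w * g * b * z"
      unfolding x_def b_def power2_eq_square by (simp add: mult.assoc)
    also have "\<dots> = b * z * w * b * g * z" using bgb c by (metis mult.assoc)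
    also have "\<dots> = x" unfolding x_def using bzwb c by (metis mult.assoc)
    finally show "a * (w * x)^2 = x" .
    have "w * a * w * x = w * (b * g * b) * z" unfolding x_def b_def by (simp add: mult.assoc c)
    also have "\<dots> = w * a * w * z" using bgb b_def by (simp add: mult.assoc)
    finally show "adj (w * a * w * x) = w * a * w * x" using z2 by simp
    have "x * w * (a * w)^2 = g * (b * z * w * b) * b"
      unfolding x_def b_def power2_eq_square by (simp add: mult.assoc)
    also have "\<dots> = b" using bzwb bb by (simp add: mult.assoc)
    finally show "x * w * (a * w)^2 = a * w" using b_def by simp
  qed
  thus "has_w_core_inverse w a" unfolding has_w_core_inverse_def by blast
qed

end
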